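(* If an ES basic fusion operator $\nabla$ satisfies (ESF-U) and (ESF-I), then it satisfies (ESF-P).
   Context: Setting: epistemic space $(\mathcal E,B,\mathcal L_{\mathcal P})$ ($\mathcal E$ nonempty, $B:\mathcal E\to$ propositional formulas over finite $\mathcal P$, image modulo equivalence exactly the consistent formulas); agents: well-ordered set $\mathcal S$; society: nonempty finite $N\subseteq\mathcal S$; $N$-profile $\Phi:N\to\mathcal E$, $E_i=\Phi(i)$, identified with $E_i$ if $N=\{i\}$; profiles on $\{i_1<\dots<i_n\}$, $\{j_1<\dots<j_m\}$ equivalent if $n=m$ and entries coincide position-wise. ES basic fusion operator: a map $\nabla(\Phi,E)\in\mathcal E$ with (ESF1) $B(\nabla(\Phi,E))\vdash B(E)$; (ESF2) equivalent profiles and $B(E)\equiv B(E')$ give equivalent $B(\nabla)$; (ESF3) if $B(E)\equiv B(E')\wedge B(E'')$ then $B(\nabla(\Phi,E'))\wedge B(E'')\vdash B(\nabla(\Phi,E))$; (ESF4) if moreover $B(\nabla(\Phi,E'))\wedge B(E'')\nvdash\bot$ then $B(\nabla(\Phi,E))\vdash B(\nabla(\Phi,E'))\wedge B(E'')$. (ESF-U): for every society $N$, $N$-profile $\Phi$, $E$: if $E_i=E_j$ for all $i,j\in N$ then $B(\nabla(\Phi,E))\equiv B(\nabla(E_i,E))$ for all $i\in N$. (ESF-I): for every $N$, $N$-profiles $\Phi,\Phi'$ and $E$, if for every $E'$ with $B(E')\vdash B(E)$ one has $B(\nabla(E_j,E'))\equiv B(\nabla(E'_j,E'))$ for all $j\in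 N$, then $B(\nabla(\Phi,E))\equiv B(\nabla(\Phi',E))$. (ESF-P): for every $N$, $N$-profile $\Phi$, $E,E'$: if $\bigwedge_{i\in N}B(\nabla(E_i,E))\nvdash\bot$ and $B(\nabla(E_i,E))\wedge B(E')\vdash\bot$ for all $i\in N$, then $B(\nabla(\Phi,E))\wedge B(E')\vdash\bot$. *)

theory Defs
  imports Main
begin

datatype 'p form =
    Atom 'p
  | FBot
  | FTop
  | Neg "'p form"
  | FAnd "'p form" "'p form"
  | FOr "'p form" "'p form"
  | FImp "'p form" "'p form"

fun sat :: "('p \<Rightarrow> bool) \<Rightarrow> 'p form \<Rightarrow> bool" where
  "sat v (Atom p) = v p"
| "sat v FBot = False"
| "sat v FTop = True"
| "sat v (Neg f) = (\<not> sat v f)"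
| "sat v (FAnd f g) = (sat v f \<and> sat v g)"
| "sat v (FOr f g) = (sat v f \<or> sat v g)"
| "sat v (FImp f g) = (sat v f \<longrightarrow> sat v g)"

definition entails :: "'p form \<Rightarrow> 'p form \<Rightarrow> bool" (infix "\<turnstile>" 55) where
  "f \<turnstile> g \<longleftrightarrow> (\<forall>v. sat v f \<longrightarrow> sat v g)"

definition equiv_form :: "'p form \<Rightarrow> 'p form \<Rightarrow> bool" (infix "\<equiv>\<^sub>F" 55) where
  "f \<equiv>\<^sub>F g \<longleftrightarrow> f \<turnstile> g \<and> g \<turnstile> f"

definition consistent :: "'p form \<Rightarrow> bool" where
  "consistent f \<longleftrightarrow> \<not> (f \<turnstile> FBot)"

definition BigAnd :: "'p form list \<Rightarrow> 'p form" where
  "BigAnd fs = foldr FAnd fs FTop"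

text \<open>The set of epistemic states is the (nonempty) type 'e; B maps states to formulas;
  the image of B modulo equivalence is exactly the consistent formulas.\<close>
definition epistemic_space :: "('e \<Rightarrow> 'p::finite form) \<Rightarrow> bool" where
  "epistemic_space B \<longleftrightarrow>
     (\<forall>e. consistent (B e)) \<and> (\<forall>f. consistent f \<longrightarrow> (\<exists>e. B e \<equiv>\<^sub>F f))"

text \<open>Agents form a well-ordered type 's. A profile is a partial map whose domain is
  the society N (finite and nonempty); an N-profile is a profile with domain N.\<close>
definition is_profile :: "('s \<rightharpoonup> 'e) \<Rightarrow> bool" where
  "is_profile \<Phi> \<longleftrightarrow> finite (dom \<Phi>) \<and> dom \<Phi> \<noteq> {}"

definition single :: "'s \<Rightarrow> 'e \<Rightarrow> ('s \<rightharpoonup> 'e)" where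
  "single i E = [i \<mapsto> E]"

definition profile_equiv :: "('s::wellorder \<rightharpoonup> 'e) \<Rightarrow> ('s \<rightharpoonup> 'e) \<Rightarrow> bool" where
  "profile_equiv \<Phi> \<Phi>' \<longleftrightarrow>
     map (\<lambda>i. the (\<Phi> i)) (sorted_list_of_set (dom \<Phi>)) =
     map (\<lambda>i. the (\<Phi>' i)) (sorted_list_of_set (dom \<Phi>'))"

definition ES_basic_fusion ::
  "('e \<Rightarrow> 'p::finite form) \<Rightarrow> (('s::wellorder \<rightharpoonup> 'e) \<Rightarrow> 'e \<Rightarrow> 'e) \<Rightarrow> bool" where
  "ES_basic_fusion B fus \<longleftrightarrow>
     \<comment> \<open>ESF1\<close>
     (\<forall>\<Phi> E. is_profile \<Phi> \<longrightarrow> B (fus \<Phi> E) \<turnstile> B E) \<and>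
     \<comment> \<open>ESF2\<close>
     (\<forall>\<Phi> \<Phi>' E E'. is_profile \<Phi> \<longrightarrow> is_profile \<Phi>' \<longrightarrow> profile_equiv \<Phi> \<Phi>' \<longrightarrow>
        B E \<equiv>\<^sub>F B E' \<longrightarrow> B (fus \<Phi> E) \<equiv>\<^sub>F B (fus \<Phi>' E')) \<and>
     \<comment> \<open>ESF3\<close>
     (\<forall>\<Phi> E E' E''. is_profile \<Phi> \<longrightarrow> B E \<equiv>\<^sub>F FAnd (B E') (B E'') \<longrightarrow>
        FAnd (B (fus \<Phi> E')) (B E'') \<turnstile> B (fus \<Phi> E)) \<and>
     \<comment> \<open>ESF4\<close>
     (\<forall>\<Phi> E E' E''. is_profile \<Phi> \<longrightarrow> B E \<equiv>\<^sub>F FAnd (B E') (B E'') \<longrightarrow>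
        consistent (FAnd (B (fus \<Phi> E')) (B E'')) \<longrightarrow>
        B (fus \<Phi> E) \<turnstile> FAnd (B (fus \<Phi> E')) (B E''))"

definition ESF_U ::
  "('e \<Rightarrow> 'p::finite form) \<Rightarrow> (('s::wellorder \<rightharpoonup> 'e) \<Rightarrow> 'e \<Rightarrow> 'e) \<Rightarrow> bool" where
  "ESF_U B fus \<longleftrightarrow>
     (\<forall>\<Phi> E. is_profile \<Phi> \<longrightarrow>
        (\<forall>i\<in>dom \<Phi>. \<forall>j\<in>dom \<Phi>. \<Phi> i = \<Phi> j) \<longrightarrow>
        (\<forall>i\<in>dom \<Phi>. B (fus \<Phi> E) \<equiv>\<^sub>F B (fus (single i (the (\<Phi> i))) E)))"

definition ESF_I ::
  "('e \<Rightarrow> 'p::finite form) \<Rightarrow> (('s::wellorder \<rightharpoonup> 'e) \<Rightarrow> 'e \<Rightarrow> 'e) \<Rightarrow> bool" where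
  "ESF_I B fus \<longleftrightarrow>
     (\<forall>\<Phi> \<Phi>' E. is_profile \<Phi> \<longrightarrow> dom \<Phi>' = dom \<Phi> \<longrightarrow>
        (\<forall>E'. B E' \<turnstile> B E \<longrightarrow>
           (\<forall>j\<in>dom \<Phi>. B (fus (single j (the (\<Phi> j))) E') \<equiv>\<^sub>F
                       B (fus (single j (the (\<Phi>' j))) E'))) \<longrightarrow>
        B (fus \<Phi> E) \<equiv>\<^sub>F B (fus \<Phi>' E))"

definition ESF_P ::
  "('e \<Rightarrow> 'p::finite form) \<Rightarrow> (('s::wellorder \<rightharpoonup> 'e) \<Rightarrow> 'e \<Rightarrow> 'e) \<Rightarrow> bool" where
  "ESF_P B fus \<longleftrightarrow>
     (\<forall>\<Phi> E E'. is_profile \<Phi> \<longrightarrow>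
        consistent (BigAnd (map (\<lambda>i. B (fus (single i (the (\<Phi> i))) E))
                               (sorted_list_of_set (dom \<Phi>)))) \<longrightarrow>
        (\<forall>i\<in>dom \<Phi>. FAnd (B (fus (single i (the (\<Phi> i))) E)) (B E') \<turnstile> FBot) \<longrightarrow>
        FAnd (B (fus \<Phi> E)) (B E') \<turnstile> FBot)"

end

theory Submission
  imports Defs
begin

definition mods :: "'p form \<Rightarrow> ('p \<Rightarrow> bool) set" where
  "mods f = {v. sat v f}"

lemma entails_mods: "(f \<turnstile> g) \<longleftrightarrow> mods f \<subseteq> mods g"
  by (auto simp: entails_def mods_def)

lemma equiv_mods: "(f \<equiv>\<^sub>F g) \<longleftrightarrow> mods f = mods g"
  by (auto simp: equiv_form_def entails_def mods_def)

lemma cons_mods: "consistent f \<longleftrightarrow> mods f \<noteq> {}"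
  by (auto simp: consistent_def entails_def mods_def)

lemma mods_simps[simp]:
  "mods (FAnd f g) = mods f \<inter> mods g"
  "mods (FOr f g) = mods f \<union> mods g"
  "mods FBot = {}"
  by (auto simp: mods_def)

lemma sat_foldr: "sat v (foldr FAnd xs FTop) \<longleftrightarrow> (\<forall>x\<in>set xs. sat v x)"
  by (induction xs) auto

lemma mods_BigAnd: "mods (BigAnd fs) = {v. \<forall>f\<in>set fs. sat v f}"
  by (auto simp: mods_def BigAnd_def sat_foldr)

definition charf :: "('p::finite \<Rightarrow> bool) \<Rightarrow> 'p form" where
  "charf w = foldr FAnd (map (\<lambda>p. if w p then Atom p else Neg (Atom p))
                            (SOME ps. set ps = (UNIV::'p set))) FTop"

lemma sat_charf: fixes w :: "'p::finite \<Rightarrow> bool" shows "sat v (charf w) \<longleftrightarrow> v = w"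
proof -
  have "\<exists>ps. set ps = (UNIV::'p set)" by (rule finite_list[OF finite_UNIV])
  hence S: "set (SOME ps. set ps = (UNIV::'p set)) = UNIV" by (rule someI_ex)
  have "sat v (charf w) \<longleftrightarrow> (\<forall>x\<in>set (map (\<lambda>p. if w p then Atom p else Neg (Atom p))
                            (SOME ps. set ps = (UNIV::'p set))). sat v x)"
    unfolding charf_def sat_foldr ..
  also have "\<dots> \<longleftrightarrow> (\<forall>p. sat v (if w p then Atom p else Neg (Atom p)))"
    unfolding set_map S by blast
  also have "\<dots> \<longleftrightarrow> (\<forall>p. v p = w p)"
    by (intro all_cong1) simp
  also have "\<dots> \<longleftrightarrow> v = w" by (simp add: fun_eq_iff)
  finally show ?thesis .
qed

lemma mods_charf: fixes w :: "'p::finite \<Rightarrow> bool" shows "mods (charf w) = {w}"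
  by (auto simp: mods_def sat_charf)

lemma single_profile: "is_profile (single j F)"
  by (simp add: is_profile_def single_def)

lemma single_equiv: "profile_equiv (single j F) (single k F)"
  by (simp add: profile_equiv_def single_def)

lemma restrict:
  assumes fus: "ES_basic_fusion B fus" and es: "epistemic_space B"
    and S: "is_profile S" and sub: "mods (B E'') \<subseteq> mods (B E)"
  shows "mods (B (fus S E'')) \<subseteq> mods (B E'')"
    and "mods (B (fus S E'')) \<noteq> {}"
    and "mods (B (fus S E)) \<inter> mods (B E'') \<noteq> {} \<Longrightarrow>
         mods (B (fus S E'')) = mods (B (fus S E)) \<inter> mods (B E'')"
proof -
  have eq: "B E'' \<equiv>\<^sub>F FAnd (B E) (B E'')" using sub by (auto simp: equiv_mods)
  have f1: "\<forall>\<Phi> E. is_profile \<Phi> \<longrightarrow> B (fus \<Phi> E) \<turnstile> B E"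
   and f3: "\<forall>\<Phi> E E' E''. is_profile \<Phi> \<longrightarrow> B E \<equiv>\<^sub>F FAnd (B E') (B E'') \<longrightarrow>
        FAnd (B (fus \<Phi> E')) (B E'') \<turnstile> B (fus \<Phi> E)"
   and f4: "\<forall>\<Phi> E E' E''. is_profile \<Phi> \<longrightarrow> B E \<equiv>\<^sub>F FAnd (B E') (B E'') \<longrightarrow>
        consistent (FAnd (B (fus \<Phi> E')) (B E'')) \<longrightarrow>
        B (fus \<Phi> E) \<turnstile> FAnd (B (fus \<Phi> E')) (B E'')"
    using fus unfolding ES_basic_fusion_def by blast+
  show "mods (B (fus S E'')) \<subseteq> mods (B E'')" using f1 S by (simp add: entails_mods)
  show "mods (B (fus S E'')) \<noteq> {}" using es by (simp add: epistemic_space_def cons_mods)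
  assume c: "mods (B (fus S E)) \<inter> mods (B E'') \<noteq> {}"
  have "FAnd (B (fus S E)) (B E'') \<turnstile> B (fus S E'')" using f3 S eq by blast
  moreover have "B (fus S E'') \<turnstile> FAnd (B (fus S E)) (B E'')"
    using f4 S eq c by (simp add: cons_mods)
  ultimately show "mods (B (fus S E'')) = mods (B (fus S E)) \<inter> mods (B E'')"
    unfolding entails_mods mods_simps by blast
qed

lemma two_world:
  assumes fus: "ES_basic_fusion B fus" and es: "epistemic_space B"
    and S: "is_profile S" and sub: "mods (B E'') \<subseteq> {w, w'}"
    and ww: "{w, w'} \<subseteq> mods (B E)"
    and inw: "w \<in> mods (B (fus S E))" and nw': "w' \<notin> mods (B (fus S E))"
  shows "mods (B (fus S E'')) = (if w \<in> mods (B E'') then {w} else {w'})"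
proof -
  have sub2: "mods (B E'') \<subseteq> mods (B E)" using sub ww by blast
  note r = restrict[OF fus es S sub2]
  show ?thesis
  proof (cases "w \<in> mods (B E'')")
    case True
    hence "mods (B (fus S E'')) = mods (B (fus S E)) \<inter> mods (B E'')"
      using r(3) inw by blast
    then show ?thesis using True inw nw' sub by auto
  next
    case False
    then show ?thesis using r(1,2) sub by auto
  qed
qed

theorem mainTheorem12:
  fixes B :: "'e \<Rightarrow> 'p::finite form"
    and fus :: "('s::wellorder \<rightharpoonup> 'e) \<Rightarrow> 'e \<Rightarrow> 'e"
  assumes "epistemic_space B"
    and "ES_basic_fusion B fus"
    and "ESF_U B fus"
    and "ESF_I B fus"
  shows "ESF_P B fus"
  unfolding ESF_P_def
proof (intro allI impI)
  fix \<Phi> :: "'s \<rightharpoonup> 'e" and E E'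
  note es = assms(1) and fus = assms(2)
  assume P: "is_profile \<Phi>"
    and C: "consistent (BigAnd (map (\<lambda>i. B (fus (single i (the (\<Phi> i))) E))
                               (sorted_list_of_set (dom \<Phi>))))"
    and D: "\<forall>i\<in>dom \<Phi>. FAnd (B (fus (single i (the (\<Phi> i))) E)) (B E') \<turnstile> FBot"
  have fin: "finite (dom \<Phi>)" and ne: "dom \<Phi> \<noteq> {}" using P by (auto simp: is_profile_def)
  have setl: "set (sorted_list_of_set (dom \<Phi>)) = dom \<Phi>" using fin by simp
  obtain w where w0: "w \<in> mods (BigAnd (map (\<lambda>i. B (fus (single i (the (\<Phi> i))) E))
                               (sorted_list_of_set (dom \<Phi>))))"
    using C unfolding cons_mods by blast
  have w: "\<forall>i\<in>dom \<Phi>. w \<in> mods (B (fus (single i (the (\<Phi> i))) E))"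
    using w0 unfolding mods_BigAnd setl set_map by (auto simp: mods_def)
  have f1: "\<forall>\<Phi> E. is_profile \<Phi> \<longrightarrow> B (fus \<Phi> E) \<turnstile> B E"
   and f2: "\<forall>\<Phi> \<Phi>' E E'. is_profile \<Phi> \<longrightarrow> is_profile \<Phi>' \<longrightarrow> profile_equiv \<Phi> \<Phi>' \<longrightarrow>
        B E \<equiv>\<^sub>F B E' \<longrightarrow> B (fus \<Phi> E) \<equiv>\<^sub>F B (fus \<Phi>' E')"
    using fus unfolding ES_basic_fusion_def by blast+
  show "FAnd (B (fus \<Phi> E)) (B E') \<turnstile> FBot"
  proof (rule ccontr)
    assume "\<not> ?thesis"
    hence "mods (B (fus \<Phi> E)) \<inter> mods (B E') \<noteq> {}" unfolding entails_mods mods_simps by blast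
    then obtain w' where w'1: "w' \<in> mods (B (fus \<Phi> E))" and w'2: "w' \<in> mods (B E')"
      by blast
    have nw': "\<forall>i\<in>dom \<Phi>. w' \<notin> mods (B (fus (single i (the (\<Phi> i))) E))"
    proof
      fix i assume i: "i \<in> dom \<Phi>"
      have "mods (B (fus (single i (the (\<Phi> i))) E)) \<inter> mods (B E') \<subseteq> {}"
        using bspec[OF D i] unfolding entails_mods mods_simps .
      thus "w' \<notin> mods (B (fus (single i (the (\<Phi> i))) E))" using w'2 by blast
    qed
    obtain j0 where j0: "j0 \<in> dom \<Phi>" using ne by blast
    define F0 where "F0 = the (\<Phi> j0)"
    have wE: "w \<in> mods (B E)"
    proof -
      have "B (fus (single j0 (the (\<Phi> j0))) E) \<turnstile> B E" by (rule f1[rule_format, OF single_profile])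
      thus ?thesis using w j0 unfolding entails_mods by blast
    qed
    have w'E: "w' \<in> mods (B E)"
    proof -
      have "B (fus \<Phi> E) \<turnstile> B E" by (rule f1[rule_format, OF P])
      thus ?thesis using w'1 unfolding entails_mods by blast
    qed
    have neq: "w \<noteq> w'" using bspec[OF w j0] bspec[OF nw' j0] by metis
    obtain E2 where E2: "B E2 \<equiv>\<^sub>F FOr (charf w) (charf w')"
    proof -
      have "consistent (FOr (charf w) (charf w'))" unfolding cons_mods by (simp add: mods_charf)
      moreover have "\<forall>f. consistent f \<longrightarrow> (\<exists>e. B e \<equiv>\<^sub>F f)" using es unfolding epistemic_space_def by blast
      ultimately obtain e where "B e \<equiv>\<^sub>F FOr (charf w) (charf w')" by blast
      then show ?thesis by (rule that)
    qed
    have mE2: "mods (B E2) = {w, w'}" using E2 by (auto simp: equiv_mods mods_charf)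
    define \<Phi>' where "\<Phi>' = (\<lambda>i. if i \<in> dom \<Phi> then Some F0 else None)"
    have dom': "dom \<Phi>' = dom \<Phi>" by (auto simp: \<Phi>'_def dom_def)
    have P': "is_profile \<Phi>'" using P dom' by (simp add: is_profile_def)
    have F0j: "\<And>j. j \<in> dom \<Phi> \<Longrightarrow> mods (B (fus (single j F0) E)) = mods (B (fus (single j0 F0) E))"
    proof -
      fix j
      have "B E \<equiv>\<^sub>F B E" by (simp add: equiv_mods)
      hence "B (fus (single j F0) E) \<equiv>\<^sub>F B (fus (single j0 F0) E)"
        by (rule f2[rule_format, OF single_profile single_profile single_equiv])
      thus "mods (B (fus (single j F0) E)) = mods (B (fus (single j0 F0) E))" by (simp add: equiv_mods)
    qed
    have ww: "{w, w'} \<subseteq> mods (B E)" using wE w'E by auto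
    have TW: "mods (B (fus (single j F) E'')) = (if w \<in> mods (B E'') then {w} else {w'})"
      if "w \<in> mods (B (fus (single j F) E))" "w' \<notin> mods (B (fus (single j F) E))"
         "mods (B E'') \<subseteq> {w, w'}" for j F E''
      by (rule two_world[OF fus es single_profile that(3) ww that(1,2)])
    have j0w: "w \<in> mods (B (fus (single j0 F0) E))" "w' \<notin> mods (B (fus (single j0 F0) E))"
      using w nw' j0 by (auto simp: F0_def)
    have Ih: "\<forall>E'. B E' \<turnstile> B E2 \<longrightarrow>
           (\<forall>j\<in>dom \<Phi>. B (fus (single j (the (\<Phi> j))) E') \<equiv>\<^sub>F
                       B (fus (single j (the (\<Phi>' j))) E'))"
      proof (intro allI impI ballI)
        fix E'' j assume h: "B E'' \<turnstile> B E2" and j: "j \<in> dom \<Phi>"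
        have s: "mods (B E'') \<subseteq> {w, w'}" using h mE2 by (simp add: entails_mods)
        have a: "the (\<Phi>' j) = F0" using j by (simp add: \<Phi>'_def)
        show "B (fus (single j (the (\<Phi> j))) E'') \<equiv>\<^sub>F B (fus (single j (the (\<Phi>' j))) E'')"
        proof -
          have A: "mods (B (fus (single j (the (\<Phi> j))) E'')) = (if w \<in> mods (B E'') then {w} else {w'})"
            by (rule TW[OF bspec[OF w j] bspec[OF nw' j] s])
          have b1: "w \<in> mods (B (fus (single j F0) E))" using F0j[OF j] j0w(1) by simp
          have b2: "w' \<notin> mods (B (fus (single j F0) E))" using F0j[OF j] j0w(2) by simp
          have Bq: "mods (B (fus (single j F0) E'')) = (if w \<in> mods (B E'') then {w} else {w'})"
            by (rule TW[OF b1 b2 s])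
          show ?thesis unfolding a equiv_mods A Bq ..
        qed
      qed
    have I: "\<forall>\<Phi> \<Phi>' E. is_profile \<Phi> \<longrightarrow> dom \<Phi>' = dom \<Phi> \<longrightarrow>
        (\<forall>E'. B E' \<turnstile> B E \<longrightarrow>
           (\<forall>j\<in>dom \<Phi>. B (fus (single j (the (\<Phi> j))) E') \<equiv>\<^sub>F
                       B (fus (single j (the (\<Phi>' j))) E'))) \<longrightarrow>
        B (fus \<Phi> E) \<equiv>\<^sub>F B (fus \<Phi>' E)" using assms(4) unfolding ESF_I_def by blast
    have "B (fus \<Phi> E2) \<equiv>\<^sub>F B (fus \<Phi>' E2)"
      by (rule mp[OF mp[OF mp[OF spec[OF spec[OF spec[OF I, of \<Phi>], of \<Phi>'], of E2] P] dom'] Ih])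
    moreover have "B (fus \<Phi>' E2) \<equiv>\<^sub>F B (fus (single j0 (the (\<Phi>' j0))) E2)"
    proof -
      have U: "\<forall>\<Phi> E. is_profile \<Phi> \<longrightarrow>
        (\<forall>i\<in>dom \<Phi>. \<forall>j\<in>dom \<Phi>. \<Phi> i = \<Phi> j) \<longrightarrow>
        (\<forall>i\<in>dom \<Phi>. B (fus \<Phi> E) \<equiv>\<^sub>F B (fus (single i (the (\<Phi> i))) E))"
        using assms(3) unfolding ESF_U_def by blast
      have eqs: "\<forall>i\<in>dom \<Phi>'. \<forall>j\<in>dom \<Phi>'. \<Phi>' i = \<Phi>' j" unfolding dom' by (simp add: \<Phi>'_def)
      have "j0 \<in> dom \<Phi>'" using j0 dom' by simp
      then show ?thesis using U P' eqs by blast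
    qed
    moreover have "the (\<Phi>' j0) = F0" using j0 by (simp add: \<Phi>'_def)
    ultimately have m1: "mods (B (fus \<Phi> E2)) = {w}"
      using TW[of j0 F0 E2] j0w mE2 by (simp add: equiv_mods)
    have "mods (B (fus \<Phi> E2)) = mods (B (fus \<Phi> E)) \<inter> mods (B E2)"
      using restrict(3)[OF fus es P, of E2 E] mE2 ww w'1 by auto
    then show False using m1 w'1 mE2 neq by auto
  qed
qed

end
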